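(* Let $n\geqslant 2$ and $N=\{1,\ldots,n\}$. Then $\mathscr{BG}(n)$, viewed as a subset of $\mathbb{R}^{2^N\setminus\{\varnothing\}}$, is a $(2^n-1)$-dimensional polyhedral cone which is not pointed. Its lineality space has dimension $n$, with basis $(w_i)_{i\in N}$, where $w_i=\sum_{S\subseteq N,\, S\ni i}\delta_S$.
   Context: A game on $N=\{1,\ldots,n\}$ is a map $v:2^N\to\mathbb{R}$ with $v(\varnothing)=0$; games are identified with vectors in $\mathbb{R}^{2^N\setminus\{\varnothing\}}$. For nonempty $S\subseteq N$, the Dirac game $\delta_S$ is defined by $\delta_S(T)=1$ if $T=S$ and $0$ otherwise. A collection $\mathscr{B}$ of nonempty subsets of $N$ is balanced if there exist positive weights $(\lambda_S)_{S\in\mathscr{B}}$ with $\sum_{S\in\mathscr{B},S\ni i}\lambda_S=1$ for all $i\in N$; it is minimal balanced if no proper subcollection is balanced; a minimal balanced collection has a unique system of such weights, denoted $\lambda^{\mathscr{B}}_S$. $\mathfrak{B}^*(n)$ denotes the set of all minimal balanced collections on $N$ other than $\{N\}$. $\mathscr{BG}(n)$ is the set of games $v$ with $\sum_{S\in\mathscr{B}}\lambda^{\mathscr{B}}_S v(S)\leqslant v(N)$ for all $\mathscr{B}\in\mathfrak{B}^*(n)$ (the balanced games, equivalently those with nonempty core). *)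

theory Defs
  imports "HOL-Analysis.Analysis"
begin

text \<open>Players form a finite type 'n (N = UNIV, n = CARD('n)).  A game is a vector
  indexed by coalitions, i.e. of type real ^ ('n set), with value 0 at the empty set;
  the game space is thus the coordinate subspace {v. v $ {} = 0}, identified with
  R^(2^N minus the empty set).\<close>

definition games :: "(real ^ ('n::finite set)) set" where
  "games = {v. v $ {} = 0}"

definition dirac :: "'n::finite set \<Rightarrow> real ^ ('n set)" where
  "dirac S = (\<chi> T. if T = S then 1 else 0)"

definition balancing_weights :: "'n::finite set set \<Rightarrow> ('n set \<Rightarrow> real) \<Rightarrow> bool" where
  "balancing_weights B lam \<longleftrightarrow>
     (\<forall>S\<in>B. lam S > 0) \<and> (\<forall>i. (\<Sum>S\<in>{S\<in>B. i \<in> S}. lam S) = 1)"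

definition balanced :: "'n::finite set set \<Rightarrow> bool" where
  "balanced B \<longleftrightarrow> {} \<notin> B \<and> (\<exists>lam. balancing_weights B lam)"

definition minimal_balanced :: "'n::finite set set \<Rightarrow> bool" where
  "minimal_balanced B \<longleftrightarrow> balanced B \<and> (\<forall>B'. B' \<subset> B \<longrightarrow> \<not> balanced B')"

definition bweight :: "'n::finite set set \<Rightarrow> 'n set \<Rightarrow> real" where
  "bweight B = (THE lam. balancing_weights B lam \<and> (\<forall>S. S \<notin> B \<longrightarrow> lam S = 0))"

definition Bstar :: "'n::finite set set set" where
  "Bstar = {B. minimal_balanced B \<and> B \<noteq> {UNIV}}"

definition balanced_games :: "(real ^ ('n::finite set)) set" where
  "balanced_games = {v \<in> games.
     \<forall>B\<in>Bstar. (\<Sum>S\<in>B. bweight B S * v $ S) \<le> v $ UNIV}"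

definition lineality_space :: "'a::real_vector set \<Rightarrow> 'a set" where
  "lineality_space C = C \<inter> uminus ` C"

definition pointed :: "'a::real_vector set \<Rightarrow> bool" where
  "pointed C \<longleftrightarrow> lineality_space C = {0}"

definition wvec :: "'n::finite \<Rightarrow> real ^ ('n set)" where
  "wvec i = (\<Sum>S\<in>{S. i \<in> S}. dirac S)"

end

theory Submission
  imports Defs
begin


lemma reduce:
  fixes B :: "'n::finite set set"
  assumes bl: "balancing_weights B lam" and bm: "balancing_weights B mu"
    and ex: "\<exists>S\<in>B. mu S > lam S" and e: "{} \<notin> B"
  shows "\<not> minimal_balanced B"
proof -
  define D where "D = {S\<in>B. mu S > lam S}"
  have fD: "finite D" by simp
  have neD: "D \<noteq> {}" using ex D_def by auto
  define t where "t = Min ((\<lambda>S. lam S / (mu S - lam S)) ` D)"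
  obtain S0 where S0: "S0 \<in> D" "t = lam S0 / (mu S0 - lam S0)"
  proof -
    have "t \<in> (\<lambda>S. lam S / (mu S - lam S)) ` D"
      unfolding t_def using fD neD by (intro Min_in) auto
    then show ?thesis using that by auto
  qed
  have tle: "t \<le> lam S / (mu S - lam S)" if "S \<in> D" for S
    unfolding t_def using fD that by auto
  have tpos: "t > 0" using S0 bl unfolding D_def balancing_weights_def by auto
  define nu where "nu S = lam S - t * (mu S - lam S)" for S
  have nunn: "nu S \<ge> 0" if "S \<in> B" for S
  proof (cases "S \<in> D")
    case True
    then have "mu S - lam S > 0" unfolding D_def by auto
    with tle[OF True] have "t * (mu S - lam S) \<le> lam S" by (simp add: pos_le_divide_eq)
    then show ?thesis unfolding nu_def by simp
  next
    case False
    then have "mu S - lam S \<le> 0" using that unfolding D_def by auto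
    moreover have "lam S > 0" using bl that unfolding balancing_weights_def by auto
    ultimately have "t * (mu S - lam S) \<le> 0" using tpos by (simp add: mult_nonneg_nonpos)
    then show ?thesis unfolding nu_def using \<open>lam S > 0\<close> by simp
  qed
  have nu0: "nu S0 = 0" using S0 unfolding nu_def D_def by (simp add: field_simps)
  define B' where "B' = {S\<in>B. nu S > 0}"
  have sub: "B' \<subset> B" 
  proof -
    have "S0 \<notin> B'" using nu0 unfolding B'_def by auto
    moreover have "S0 \<in> B" using S0 unfolding D_def by auto
    ultimately show ?thesis unfolding B'_def by blast
  qed
  have "balancing_weights B' nu"
    unfolding balancing_weights_def
  proof (intro conjI allI ballI)
    fix S assume "S \<in> B'" then show "nu S > 0" unfolding B'_def by auto
  next
    fix i :: 'n
    have "(\<Sum>S\<in>{S\<in>B'. i \<in> S}. nu S) = (\<Sum>S\<in>{S\<in>B. i \<in> S}. nu S)"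
    proof (rule sum.mono_neutral_left)
      show "\<forall>S\<in>{S\<in>B. i \<in> S} - {S\<in>B'. i \<in> S}. nu S = 0"
        using nunn unfolding B'_def by force
    qed (auto simp: B'_def)
    also have "\<dots> = (1 + t) * (\<Sum>S\<in>{S\<in>B. i \<in> S}. lam S) - t * (\<Sum>S\<in>{S\<in>B. i \<in> S}. mu S)"
      unfolding nu_def by (simp add: sum_subtractf sum_distrib_left algebra_simps sum.distrib)
    also have "\<dots> = 1" using bl bm unfolding balancing_weights_def by simp
    finally show "(\<Sum>S\<in>{S\<in>B'. i \<in> S}. nu S) = 1" .
  qed
  then have "balanced B'" unfolding balanced_def using e sub by auto
  then show ?thesis using sub unfolding minimal_balanced_def by auto
qed


lemma bweight:
  fixes B :: "'n::finite set set"
  assumes "minimal_balanced B"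
  shows "balancing_weights B (bweight B)" "\<And>S. S \<notin> B \<Longrightarrow> bweight B S = 0"
proof -
  from assms obtain lam where lam: "balancing_weights B lam" and e: "{} \<notin> B"
    unfolding minimal_balanced_def balanced_def by auto
  define lam' where "lam' S = (if S \<in> B then lam S else 0)" for S
  have l': "balancing_weights B lam'" using lam unfolding balancing_weights_def lam'_def by auto
  have "\<exists>!l. balancing_weights B l \<and> (\<forall>S. S \<notin> B \<longrightarrow> l S = 0)"
  proof (rule ex1I[of _ lam'])
    show "balancing_weights B lam' \<and> (\<forall>S. S \<notin> B \<longrightarrow> lam' S = 0)" using l' lam'_def by auto
  next
    fix l assume l: "balancing_weights B l \<and> (\<forall>S. S \<notin> B \<longrightarrow> l S = 0)"
    show "l = lam'"
    proof
      fix S show "l S = lam' S"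
      proof (cases "S \<in> B")
        case True
        have "\<not> l S > lam' S" using reduce[of B lam' l] l l' e assms True by auto
        moreover have "\<not> l S < lam' S" using reduce[of B l lam'] l l' e assms True by auto
        ultimately show ?thesis by simp
      qed (use l lam'_def in auto)
    qed
  qed
  then have "balancing_weights B (bweight B) \<and> (\<forall>S. S \<notin> B \<longrightarrow> bweight B S = 0)"
    unfolding bweight_def by (rule theI')
  then show "balancing_weights B (bweight B)" "\<And>S. S \<notin> B \<Longrightarrow> bweight B S = 0" by auto
qed



definition is_part :: "'n::finite set set \<Rightarrow> bool" where
  "is_part P \<longleftrightarrow> {} \<notin> P \<and> (\<forall>i. \<exists>!S. S \<in> P \<and> i \<in> S)"

lemma part_cnt:
  assumes "is_part P" "S \<in> P" "i \<in> S"
  shows "{T\<in>P. i \<in> T} = {S}"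
  using assms unfolding is_part_def by blast

lemma part_ex:
  assumes "is_part P"
  obtains S where "S \<in> P" "i \<in> S"
  using assms unfolding is_part_def by blast

lemma part_min:
  fixes P :: "'n::finite set set"
  assumes "is_part P"
  shows "minimal_balanced P" "\<And>S. bweight P S = (if S \<in> P then 1 else 0)"
proof -
  define ind where "ind S = (if S \<in> P then (1::real) else 0)" for S
  have bi: "balancing_weights P ind"
    unfolding balancing_weights_def
  proof (intro conjI allI ballI)
    fix S assume "S \<in> P" then show "ind S > 0" unfolding ind_def by simp
  next
    fix i :: 'n
    obtain S where S: "S \<in> P" "i \<in> S" using part_ex[OF assms] by blast
    show "(\<Sum>S\<in>{S\<in>P. i \<in> S}. ind S) = 1"
      unfolding part_cnt[OF assms S] using S by (simp add: ind_def)
  qed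
  have "minimal_balanced P"
    unfolding minimal_balanced_def
  proof (intro conjI allI impI)
    show "balanced P" using assms bi unfolding is_part_def balanced_def by auto
  next
    fix B' assume B': "B' \<subset> P"
    then obtain S where S: "S \<in> P" "S \<notin> B'" by auto
    have "S \<noteq> {}" using S assms unfolding is_part_def by auto
    then obtain i where i: "i \<in> S" by auto
    have "{T\<in>B'. i \<in> T} \<subseteq> {T\<in>P. i \<in> T}" using B' by auto
    then have "{T\<in>B'. i \<in> T} = {}" unfolding part_cnt[OF assms S(1) i] using S(2) by auto
    then have "\<not> balanced B'" unfolding balanced_def balancing_weights_def
      by (metis sum.empty zero_neq_one)
    then show "\<not> balanced B'" .
  qed
  then show "minimal_balanced P" .
  have uniq: "l = ind" if "balancing_weights P l \<and> (\<forall>S. S \<notin> P \<longrightarrow> l S = 0)" for l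
  proof
    fix S show "l S = ind S"
    proof (cases "S \<in> P")
      case True
      have "S \<noteq> {}" using True assms unfolding is_part_def by auto
      then obtain i where i: "i \<in> S" by auto
      have "(\<Sum>T\<in>{T\<in>P. i \<in> T}. l T) = 1" using that unfolding balancing_weights_def by blast
      then show ?thesis unfolding part_cnt[OF assms True i] using True by (simp add: ind_def)
    qed (use that ind_def in auto)
  qed
  have "bweight P = ind" unfolding bweight_def
    by (rule the_equality) (use bi ind_def uniq in auto)
  then show "\<And>S. bweight P S = (if S \<in> P then 1 else 0)" using ind_def by simp
qed



lemma part_UNIV: "is_part ({UNIV} :: 'n::finite set set)"
  unfolding is_part_def by auto

lemma part_single: "is_part (range (\<lambda>j::'n::finite. {j}))"
  unfolding is_part_def by auto

lemma part_T: "T \<noteq> {} \<Longrightarrow> is_part (insert T ((\<lambda>j::'n::finite. {j}) ` (- T)))"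
  unfolding is_part_def by auto

lemma Bstar_noUNIV: "B \<in> Bstar \<Longrightarrow> UNIV \<notin> B"
proof
  assume B: "B \<in> Bstar" and U: "UNIV \<in> B"
  have "{UNIV} \<subset> B" using B U unfolding Bstar_def by auto
  moreover have "balanced ({UNIV} :: 'a set set)"
    using part_min(1)[OF part_UNIV] unfolding minimal_balanced_def by auto
  ultimately show False using B unfolding Bstar_def minimal_balanced_def by auto
qed

definition LS :: "(real ^ ('n::finite set)) set" where
  "LS = {v. v $ {} = 0 \<and> (\<forall>B\<in>Bstar. (\<Sum>S\<in>B. bweight B S * v $ S) = v $ UNIV)}"

lemma lin_eq: "lineality_space (balanced_games :: (real ^ ('n::finite set)) set) = LS"
proof -
  have m: "v \<in> uminus ` A \<longleftrightarrow> - v \<in> A" for v :: "real ^ ('n set)" and A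
    by (metis image_iff minus_minus rev_image_eqI)
  show ?thesis
    unfolding lineality_space_def LS_def set_eq_iff Int_iff m
    by (auto simp: balanced_games_def games_def sum_negf intro: antisym)
qed

lemma LS_subspace: "subspace (LS :: (real ^ ('n::finite set)) set)"
  unfolding subspace_def LS_def
proof (intro conjI ballI allI impI; clarsimp)
  fix x y :: "real ^ ('n set)" and B :: "'n set set"
  assume "B \<in> Bstar" "\<forall>B\<in>Bstar. (\<Sum>S\<in>B. bweight B S * x $ S) = x $ UNIV"
    "\<forall>B\<in>Bstar. (\<Sum>S\<in>B. bweight B S * y $ S) = y $ UNIV"
  then show "(\<Sum>S\<in>B. bweight B S * (x $ S + y $ S)) = x $ UNIV + y $ UNIV"
    by (simp add: distrib_left sum.distrib)
next
  fix c :: real and x :: "real ^ ('n set)" and B :: "'n set set"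
  assume "B \<in> Bstar" "\<forall>B\<in>Bstar. (\<Sum>S\<in>B. bweight B S * x $ S) = x $ UNIV"
  then have "(\<Sum>S\<in>B. c * (bweight B S * x $ S)) = c * x $ UNIV"
    by (simp flip: sum_distrib_left)
  then show "(\<Sum>S\<in>B. bweight B S * (c * x $ S)) = c * x $ UNIV"
    by (simp add: mult.left_commute)
qed

lemma wvec_nth: "wvec i $ T = (if i \<in> T then 1 else 0)"
proof -
  have "wvec i $ T = (\<Sum>S\<in>{S. i \<in> S}. (if T = S then 1 else 0))"
    unfolding wvec_def dirac_def by simp
  also have "\<dots> = (if i \<in> T then 1 else 0)"
    by (simp add: sum.delta')
  finally show ?thesis .
qed

lemma wvec_LS: "wvec i \<in> LS"
  unfolding LS_def
proof (intro CollectI conjI ballI)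
  show "wvec i $ {} = 0" by (simp add: wvec_nth)
next
  fix B :: "'a set set" assume B: "B \<in> Bstar"
  then have mb: "minimal_balanced B" unfolding Bstar_def by auto
  have "(\<Sum>S\<in>B. bweight B S * wvec i $ S) = (\<Sum>S\<in>{S\<in>B. i \<in> S}. bweight B S)"
    by (simp add: wvec_nth sum.inter_filter[symmetric] if_distrib cong: if_cong)
  also have "\<dots> = 1" using bweight(1)[OF mb] unfolding balancing_weights_def by blast
  finally show "(\<Sum>S\<in>B. bweight B S * wvec i $ S) = wvec i $ UNIV" by (simp add: wvec_nth)
qed

lemma part_sum:
  assumes "v \<in> LS" "is_part P" "P \<noteq> {UNIV}"
  shows "(\<Sum>S\<in>P. v $ S) = v $ UNIV"
proof -
  have PB: "P \<in> Bstar" using assms part_min unfolding Bstar_def by auto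
  have "(\<Sum>S\<in>P. bweight P S * v $ S) = v $ UNIV" using assms(1) PB unfolding LS_def by auto
  then show ?thesis using part_min(2)[OF assms(2)] by simp
qed

lemma LS_additive:
  assumes v: "v \<in> LS" and n2: "CARD('n::finite) \<ge> 2"
  shows "v $ (T :: 'n set) = (\<Sum>j\<in>T. v $ {j})"
proof -
  have ns: "range (\<lambda>j::'n. {j}) \<noteq> {UNIV}"
  proof
    assume "range (\<lambda>j::'n. {j}) = {UNIV}"
    then have "\<forall>j::'n. {j} = UNIV" by auto
    then have "card {undefined::'n} = CARD('n)" by metis
    then show False using n2 by simp
  qed
  have tot: "(\<Sum>j\<in>UNIV. v $ {j}) = v $ UNIV"
  proof -
    have inj: "inj_on (\<lambda>j::'n. {j}) X" for X by (simp add: inj_on_def)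
    have "(\<Sum>S\<in>range (\<lambda>j::'n. {j}). v $ S) = (\<Sum>j\<in>UNIV. v $ {j})"
      using sum.reindex[OF inj, of "\<lambda>S. v $ S" UNIV] by (simp add: o_def)
    then show ?thesis using part_sum[OF v part_single ns] by simp
  qed
  show ?thesis
  proof (cases "T = {}")
    case True then show ?thesis using v unfolding LS_def by simp
  next
    case ne: False
    show ?thesis
    proof (cases "T = UNIV")
      case True then show ?thesis using tot by simp
    next
      case nU: False
      have ni: "T \<notin> (\<lambda>j. {j}) ` (- T)" using ne by auto
      have "insert T ((\<lambda>j::'n. {j}) ` (- T)) \<noteq> {UNIV}" using nU by auto
      then have "v $ UNIV = (\<Sum>S\<in>insert T ((\<lambda>j::'n. {j}) ` (- T)). v $ S)"
        using part_sum[OF v part_T[OF ne]] by simp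
      also have "\<dots> = v $ T + (\<Sum>j\<in>- T. v $ {j})"
      proof -
        have inj: "inj_on (\<lambda>j::'n. {j}) X" for X by (simp add: inj_on_def)
        have "(\<Sum>S\<in>(\<lambda>j::'n. {j}) ` (- T). v $ S) = (\<Sum>j\<in>- T. v $ {j})"
          using sum.reindex[OF inj, of "\<lambda>S. v $ S" "- T"] by (simp add: o_def)
        then show ?thesis using ni by (simp add: sum.insert)
      qed
      finally have a: "v $ UNIV = v $ T + (\<Sum>j\<in>- T. v $ {j})" .
      have "(\<Sum>j\<in>UNIV. v $ {j}) = (\<Sum>j\<in>UNIV - T. v $ {j}) + (\<Sum>j\<in>T. v $ {j})"
        by (rule sum.subset_diff) auto
      then show ?thesis using a tot by (simp add: Compl_eq_Diff_UNIV)
    qed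
  qed
qed

lemma LS_span:
  assumes n2: "CARD('n::finite) \<ge> 2"
  shows "(LS :: (real ^ ('n set)) set) = span (range wvec)"
proof
  show "span (range wvec) \<subseteq> (LS :: (real ^ ('n set)) set)"
    by (rule span_minimal) (auto intro: wvec_LS LS_subspace)
next
  show "(LS :: (real ^ ('n set)) set) \<subseteq> span (range wvec)"
  proof
    fix v :: "real ^ ('n set)" assume v: "v \<in> LS"
    have "v = (\<Sum>j\<in>UNIV. v $ {j} *\<^sub>R wvec j)"
    proof (subst vec_eq_iff, intro allI)
      fix T :: "'n set"
      have "(\<Sum>j\<in>UNIV. v $ {j} *\<^sub>R wvec j) $ T = (\<Sum>j\<in>UNIV. v $ {j} * wvec j $ T)"
        by (simp only: sum_component vector_scaleR_component real_scaleR_def)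
      also have "\<dots> = (\<Sum>j\<in>UNIV. if j \<in> T then v $ {j} else 0)"
        by (rule sum.cong) (simp_all add: wvec_nth)
      also have "\<dots> = (\<Sum>j\<in>T. v $ {j})" by (simp only: sum.If_cases finite_class.finite_UNIV) simp
      also have "\<dots> = v $ T" by (rule sym[OF LS_additive[OF v n2]])
      finally show "v $ T = (\<Sum>j\<in>UNIV. v $ {j} *\<^sub>R wvec j) $ T" by (rule sym)
    qed
    also have "\<dots> \<in> span (range wvec)"
      by (intro span_sum span_scale span_base rangeI)
    finally show "v \<in> span (range wvec)" .
  qed
qed

lemma wvec_inj: "inj (wvec :: 'n::finite \<Rightarrow> real ^ ('n set))"
proof
  fix i j :: 'n assume "wvec i = wvec j"
  then have "wvec i $ {i} = wvec j $ {i}" by simp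
  then show "i = j" by (auto simp: wvec_nth split: if_splits)
qed

lemma wvec_indep: "independent (range (wvec :: 'n::finite \<Rightarrow> real ^ ('n set)))"
proof (rule real_vector.independent_if_scalars_zero)
  show "finite (range (wvec :: 'n::finite \<Rightarrow> real ^ ('n set)))" by simp
next
  fix f x assume s: "(\<Sum>x\<in>range (wvec :: 'n::finite \<Rightarrow> real ^ ('n set)). f x *\<^sub>R x) = 0"
    and x: "x \<in> range (wvec :: 'n::finite \<Rightarrow> real ^ ('n set))"
  then obtain i where xi: "x = wvec i" by auto
  have "(\<Sum>x\<in>range (wvec :: 'n::finite \<Rightarrow> real ^ ('n set)). f x *\<^sub>R x) = (\<Sum>j\<in>UNIV. f (wvec j) *\<^sub>R wvec j)"
    by (simp add: sum.reindex[OF wvec_inj])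
  then have "(\<Sum>j\<in>UNIV. f (wvec j) *\<^sub>R wvec j) $ {i} = 0" using s by simp
  then have "(\<Sum>j\<in>UNIV. if j = i then f (wvec j) else 0) = 0"
    by (simp add: wvec_nth if_distrib cong: if_cong)
  then show "f x = 0" using xi by simp
qed



lemma inner_chi: "(\<chi> S. f S) \<bullet> (v :: real ^ ('n::finite set)) = (\<Sum>S\<in>UNIV. f S * v $ S)"
  by (simp add: inner_vec_def)

lemma sum_delta_mult: "(\<Sum>S\<in>UNIV. (if S = a then 1 else 0) * (v :: real ^ ('n::finite set)) $ S) = v $ a"
proof -
  have "(\<Sum>S\<in>UNIV. (if S = a then 1 else 0) * v $ S) = (\<Sum>S\<in>UNIV. if S = a then v $ S else 0)"
    by (rule sum.cong) auto
  also have "\<dots> = v $ a" by (simp add: sum.delta)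
  finally show ?thesis .
qed

lemma games_eq: "(games :: (real ^ ('n::finite set)) set) = {v. (\<chi> S. if S = {} then 1 else 0) \<bullet> v = 0}"
  unfolding games_def inner_chi sum_delta_mult ..

lemma BG_eq: "(balanced_games :: (real ^ ('n::finite set)) set) =
   games \<inter> \<Inter> ((\<lambda>B. {v. (\<chi> S. (if S \<in> B then bweight B S else 0) - (if S = UNIV then 1 else 0)) \<bullet> v \<le> 0}) ` Bstar)"
proof -
  have "(\<chi> S. (if S \<in> B then bweight B S else 0) - (if S = UNIV then 1 else 0)) \<bullet> v
        = (\<Sum>S\<in>B. bweight B S * v $ S) - v $ UNIV" for B :: "'n set set" and v :: "real ^ ('n set)"
  proof -
    have "(\<chi> S. (if S \<in> B then bweight B S else 0) - (if S = UNIV then 1 else 0)) \<bullet> v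
       = (\<Sum>S\<in>UNIV. (if S \<in> B then bweight B S else 0) * v $ S) - v $ UNIV"
      unfolding inner_chi by (simp only: left_diff_distrib sum_subtractf sum_delta_mult)
    also have "\<dots> = (\<Sum>S\<in>B. bweight B S * v $ S) - v $ UNIV"
    proof -
      have "(\<Sum>S\<in>UNIV. (if S \<in> B then bweight B S else 0) * v $ S) = (\<Sum>S\<in>UNIV. if S \<in> B then bweight B S * v $ S else 0)"
        by (rule sum.cong) auto
      also have "\<dots> = (\<Sum>S\<in>B. bweight B S * v $ S)" by (subst sum.inter_restrict[symmetric]) simp_all
      finally show ?thesis by simp
    qed
    finally show ?thesis .
  qed
  then show ?thesis unfolding balanced_games_def by auto
qed

lemma BG_poly: "polyhedron (balanced_games :: (real ^ ('n::finite set)) set)"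
  unfolding BG_eq games_eq
  by (intro polyhedron_Int polyhedron_Inter polyhedron_hyperplane) (auto intro: polyhedron_halfspace_le)

lemma BG_cone: "cone (balanced_games :: (real ^ ('n::finite set)) set)"
  unfolding cone_def
proof (intro ballI allI impI)
  fix v :: "real ^ ('n set)" and c :: real assume v: "v \<in> balanced_games" and c: "0 \<le> c"
  show "c *\<^sub>R v \<in> balanced_games"
    unfolding balanced_games_def
  proof (intro CollectI conjI ballI)
    show "c *\<^sub>R v \<in> games" using v unfolding balanced_games_def games_def by simp
  next
    fix B :: "'n set set" assume B: "B \<in> Bstar"
    have "(\<Sum>S\<in>B. bweight B S * v $ S) \<le> v $ UNIV" using v B unfolding balanced_games_def by auto
    then have "c * (\<Sum>S\<in>B. bweight B S * v $ S) \<le> c * v $ UNIV" using c by (rule mult_left_mono)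
    then show "(\<Sum>S\<in>B. bweight B S * (c *\<^sub>R v) $ S) \<le> (c *\<^sub>R v) $ UNIV"
      by (simp add: sum_distrib_left mult.left_commute)
  qed
qed

lemma games_subspace: "subspace (games :: (real ^ ('n::finite set)) set)"
  unfolding subspace_def games_def by auto

lemma BG_span: "span (balanced_games :: (real ^ ('n::finite set)) set) = games"
proof
  show "span (balanced_games :: (real ^ ('n::finite set)) set) \<subseteq> games"
    by (rule span_minimal) (auto simp: balanced_games_def intro: games_subspace)
next
  show "(games :: (real ^ ('n::finite set)) set) \<subseteq> span balanced_games"
  proof
    fix v :: "real ^ ('n set)" assume v: "v \<in> games"
    define c where "c = \<bar>v $ UNIV\<bar> + (\<Sum>B\<in>Bstar. \<bar>\<Sum>S\<in>B. bweight B S * v $ S\<bar>)"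
    define u where "u = v + c *\<^sub>R dirac (UNIV :: 'n set)"
    have un: "UNIV \<noteq> ({} :: 'n set)" by simp
    have u_in: "u \<in> balanced_games"
      unfolding balanced_games_def
    proof (intro CollectI conjI ballI)
      show "u \<in> games" using v un unfolding u_def games_def dirac_def by simp
    next
      fix B :: "'n set set" assume B: "B \<in> Bstar"
      have nU: "UNIV \<notin> B" using Bstar_noUNIV[OF B] .
      have "(\<Sum>S\<in>B. bweight B S * u $ S) = (\<Sum>S\<in>B. bweight B S * v $ S)"
        by (rule sum.cong) (use nU in \<open>auto simp: u_def dirac_def\<close>)
      also have "\<dots> \<le> \<bar>\<Sum>S\<in>B. bweight B S * v $ S\<bar>" by simp
      also have "\<dots> \<le> (\<Sum>B\<in>Bstar. \<bar>\<Sum>S\<in>B. bweight B S * v $ S\<bar>)"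
        by (rule member_le_sum) (use B in auto)
      also have "\<dots> \<le> u $ UNIV" unfolding u_def c_def dirac_def by simp
      finally show "(\<Sum>S\<in>B. bweight B S * u $ S) \<le> u $ UNIV" .
    qed
    have d_in: "dirac (UNIV :: 'n set) \<in> balanced_games"
      unfolding balanced_games_def
    proof (intro CollectI conjI ballI)
      show "dirac (UNIV :: 'n set) \<in> games" using un unfolding games_def dirac_def by simp
    next
      fix B :: "'n set set" assume B: "B \<in> Bstar"
      have nU: "UNIV \<notin> B" using Bstar_noUNIV[OF B] .
      have "(\<Sum>S\<in>B. bweight B S * dirac (UNIV :: 'n set) $ S) = 0"
        by (rule sum.neutral) (use nU in \<open>auto simp: dirac_def\<close>)
      then show "(\<Sum>S\<in>B. bweight B S * dirac (UNIV :: 'n set) $ S) \<le> dirac (UNIV :: 'n set) $ UNIV" by (simp add: dirac_def)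
    qed
    have "v = u - c *\<^sub>R dirac (UNIV :: 'n set)" unfolding u_def by simp
    also have "\<dots> \<in> span balanced_games"
      by (intro span_diff span_scale span_base u_in d_in)
    finally show "v \<in> span balanced_games" .
  qed
qed

lemma BG_affdim: "aff_dim (balanced_games :: (real ^ ('n::finite set)) set) = 2 ^ CARD('n) - 1"
proof -
  have z: "0 \<in> (balanced_games :: (real ^ ('n::finite set)) set)"
    unfolding balanced_games_def games_def by simp
  have "aff_dim (balanced_games :: (real ^ ('n::finite set)) set) = int (dim (balanced_games :: (real ^ ('n::finite set)) set))"
    by (rule aff_dim_zero) (use z in \<open>auto intro: hull_inc\<close>)
  also have "dim (balanced_games :: (real ^ ('n::finite set)) set) = dim (span (balanced_games :: (real ^ ('n::finite set)) set))"
    by (rule dim_span[symmetric])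
  also have "\<dots> = dim (games :: (real ^ ('n::finite set)) set)"
    by (simp only: BG_span)
  also have "\<dots> = DIM(real ^ ('n set)) - 1"
    unfolding games_eq
  proof (rule dim_hyperplane)
    have "(\<chi> S. if S = {} then 1 else 0) $ {} = (1::real)" by simp
    then show "(\<chi> S. if S = {} then 1 else 0) \<noteq> (0 :: real ^ ('n set))"
      by (metis zero_index zero_neq_one)
  qed
  also have "DIM(real ^ ('n set)) = CARD('n set)" by (simp only: DIM_cart DIM_real mult_1_right)
  also have "CARD('n set) = 2 ^ CARD('n)"
    using card_Pow[of "UNIV :: 'n set", OF finite_class.finite_UNIV] by (simp only: Pow_UNIV)
  finally show ?thesis by (simp add: of_nat_diff)
qed

theorem theorem2:
  assumes "CARD('n::finite) \<ge> 2"
  shows "polyhedron (balanced_games :: (real ^ ('n set)) set)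
    \<and> cone (balanced_games :: (real ^ ('n set)) set)
    \<and> aff_dim (balanced_games :: (real ^ ('n set)) set) = 2 ^ CARD('n) - 1
    \<and> \<not> pointed (balanced_games :: (real ^ ('n set)) set)
    \<and> subspace (lineality_space (balanced_games :: (real ^ ('n set)) set))
    \<and> dim (lineality_space (balanced_games :: (real ^ ('n set)) set)) = CARD('n)
    \<and> inj (wvec :: 'n \<Rightarrow> real ^ ('n set))
    \<and> independent (range (wvec :: 'n \<Rightarrow> real ^ ('n set)))
    \<and> span (range (wvec :: 'n \<Rightarrow> real ^ ('n set)))
        = lineality_space (balanced_games :: (real ^ ('n set)) set)"
proof (intro conjI)
  show "polyhedron (balanced_games :: (real ^ ('n set)) set)" by (rule BG_poly)
  show "cone (balanced_games :: (real ^ ('n set)) set)" by (rule BG_cone)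
  show "aff_dim (balanced_games :: (real ^ ('n set)) set) = 2 ^ CARD('n) - 1" by (rule BG_affdim)
  show "\<not> pointed (balanced_games :: (real ^ ('n set)) set)"
  proof
    assume "pointed (balanced_games :: (real ^ ('n set)) set)"
    then have "(LS :: (real ^ ('n set)) set) = {0}" unfolding pointed_def lin_eq .
    then have "wvec (undefined :: 'n) = 0" using wvec_LS by blast
    then have "wvec (undefined :: 'n) $ {undefined} = 0" by simp
    then show False by (simp add: wvec_nth)
  qed
  show "subspace (lineality_space (balanced_games :: (real ^ ('n set)) set))"
    unfolding lin_eq by (rule LS_subspace)
  show "dim (lineality_space (balanced_games :: (real ^ ('n set)) set)) = CARD('n)"
    unfolding lin_eq LS_span[OF assms]
    by (simp add: dim_eq_card_independent[OF wvec_indep] card_image[OF wvec_inj])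
  show "inj (wvec :: 'n \<Rightarrow> real ^ ('n set))" by (rule wvec_inj)
  show "independent (range (wvec :: 'n \<Rightarrow> real ^ ('n set)))" by (rule wvec_indep)
  show "span (range (wvec :: 'n \<Rightarrow> real ^ ('n set)))
        = lineality_space (balanced_games :: (real ^ ('n set)) set)"
    unfolding lin_eq LS_span[OF assms] ..
qed


end
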